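(* Let $f_1,\dots,f_n:\mathbb{R}^d\to\mathbb{R}$ be such that each $f_i$ is $L_i$-smooth and has a minimizer $x_i$, let $\alpha_1,\dots,\alpha_n\in(0,1)$ and $\tilde f(x) = \frac{1}{n}\sum_{i=1}^n f_i(\alpha_i x + (1-\alpha_i)x_i)$. Then for every $x\in\mathbb{R}^d$, \[ \|\nabla \tilde f(x)\| \leq \frac{1}{n}\sum_{i=1}^n \alpha_i^2 L_i\|x - x_i\| \quad\text{and}\quad \tilde f(x) \leq \frac{1}{n}\sum_{i=1}^n f_i(x_i) + \frac{1}{2n}\sum_{i=1}^n\alpha_i^2 L_i\|x-x_i\|^2. \]
   Context: A differentiable $g$ is $L$-smooth if $\|\nabla g(x)-\nabla g(y)\|\leq L\|x-y\|$ for all $x,y$. *)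

theory Defs
  imports "HOL-Analysis.Analysis"
begin

text \<open>The gradient of a real-valued function at a point (Riesz representative of the
Frechet derivative); it is well defined whenever the function is differentiable there.\<close>
definition grad :: "('a::real_inner \<Rightarrow> real) \<Rightarrow> 'a \<Rightarrow> 'a" where
  "grad f x = (THE D. GDERIV f x :> D)"

definition L_smooth :: "real \<Rightarrow> ('a::real_inner \<Rightarrow> real) \<Rightarrow> bool" where
  "L_smooth L g \<longleftrightarrow> (\<forall>x. g differentiable (at x)) \<and>
     (\<forall>x y. norm (grad g x - grad g y) \<le> L * norm (x - y))"

end

theory Submission
  imports Defs
begin

lemma grad_eq:
  assumes "GDERIV f x :> D" shows "grad f x = D"
  unfolding grad_def
proof (rule the_equality)
  show "GDERIV f x :> D" by (rule assms)
next
  fix D' assume "GDERIV f x :> D'"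
  hence "(\<lambda>h. h \<bullet> D') = (\<lambda>h. h \<bullet> D)"
    using assms unfolding gderiv_def by (rule has_derivative_unique)
  hence "(D' - D) \<bullet> D' = (D' - D) \<bullet> D" by metis
  hence "(D' - D) \<bullet> (D' - D) = 0" by (simp add: inner_diff_right)
  thus "D' = D" by simp
qed

lemma grad_works:
  fixes f :: "'a::euclidean_space \<Rightarrow> real"
  assumes "f differentiable at x" shows "GDERIV f x :> grad f x"
proof -
  obtain f' where fd: "(f has_derivative f') (at x)" using assms differentiable_def by blast
  have lin: "linear f'" using fd has_derivative_linear by blast
  define D where "D = (\<Sum>b\<in>Basis. f' b *\<^sub>R b)"
  have "f' = (\<lambda>h. h \<bullet> D)"
  proof
    fix h :: 'a
    have "f' h = f' (\<Sum>b\<in>Basis. (h \<bullet> b) *\<^sub>R b)" by (simp add: euclidean_representation)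
    also have "\<dots> = (\<Sum>b\<in>Basis. (h \<bullet> b) * f' b)"
      by (simp add: linear_sum[OF lin] linear_scale[OF lin])
    also have "\<dots> = h \<bullet> D" unfolding D_def by (simp add: inner_sum_right mult.commute)
    finally show "f' h = h \<bullet> D" .
  qed
  hence "GDERIV f x :> D" using fd unfolding gderiv_def by simp
  thus ?thesis using grad_eq by metis
qed

lemma grad_zero_min:
  fixes f :: "'a::euclidean_space \<Rightarrow> real"
  assumes "f differentiable at x" "\<And>y. f x \<le> f y" shows "grad f x = 0"
proof -
  have "(\<lambda>h. h \<bullet> grad f x) = (\<lambda>h. 0)"
    using has_derivative_local_min[OF grad_works[OF assms(1), unfolded gderiv_def]] assms(2) by simp
  hence "grad f x \<bullet> grad f x = 0" by metis
  thus ?thesis by simp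
qed

lemma descent:
  fixes f :: "'a::euclidean_space \<Rightarrow> real"
  assumes "L_smooth L f"
  shows "f y \<le> f x + grad f x \<bullet> (y - x) + L / 2 * (norm (y - x))\<^sup>2"
proof -
  define h where "h = y - x"
  define G where "G = grad f x"
  define g where "g = (\<lambda>t::real. f (x + t *\<^sub>R h) - t * (G \<bullet> h) - L / 2 * t\<^sup>2 * (norm h)\<^sup>2)"
  have diff: "\<And>z. f differentiable at z" and lip: "\<And>a b. norm (grad f a - grad f b) \<le> L * norm (a - b)"
    using assms unfolding L_smooth_def by auto
  have "g 1 \<le> g 0"
  proof (rule DERIV_nonpos_imp_nonincreasing[of 0 1 g])
    fix t :: real assume t: "0 \<le> t" "t \<le> 1"
    have d1: "((\<lambda>t. x + t *\<^sub>R h) has_derivative (\<lambda>s. s *\<^sub>R h)) (at t)"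
      by (auto intro!: derivative_eq_intros)
    have d2: "((\<lambda>t. f (x + t *\<^sub>R h)) has_derivative (\<lambda>s. (s *\<^sub>R h) \<bullet> grad f (x + t *\<^sub>R h))) (at t)"
      using has_derivative_compose[OF d1 grad_works[OF diff, unfolded gderiv_def]] by simp
    hence d3: "DERIV (\<lambda>t. f (x + t *\<^sub>R h)) t :> h \<bullet> grad f (x + t *\<^sub>R h)"
      unfolding has_field_derivative_def by (simp add: mult_commute_abs)
    have "DERIV g t :> h \<bullet> grad f (x + t *\<^sub>R h) - G \<bullet> h - L / 2 * (2 * t) * (norm h)\<^sup>2"
      unfolding g_def
      by (rule derivative_eq_intros d3 refl | simp)+
    moreover have "h \<bullet> grad f (x + t *\<^sub>R h) - G \<bullet> h - L / 2 * (2 * t) * (norm h)\<^sup>2 \<le> 0"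
    proof -
      have "h \<bullet> grad f (x + t *\<^sub>R h) - G \<bullet> h = h \<bullet> (grad f (x + t *\<^sub>R h) - grad f x)"
        by (simp add: G_def inner_diff_right inner_commute)
      also have "\<dots> \<le> norm h * norm (grad f (x + t *\<^sub>R h) - grad f x)"
        by (rule norm_cauchy_schwarz)
      also have "\<dots> \<le> norm h * (L * norm (t *\<^sub>R h))"
        using lip[of "x + t *\<^sub>R h" x] by (intro mult_left_mono) auto
      also have "\<dots> = L * t * (norm h)\<^sup>2" using t by (simp add: power2_eq_square)
      finally show ?thesis by simp
    qed
    ultimately show "\<exists>y. DERIV g t :> y \<and> y \<le> 0" by blast
  qed simp
  thus ?thesis unfolding g_def h_def G_def by (simp add: inner_commute)
qed

theorem lemma1:
  fixes f :: "nat \<Rightarrow> 'a::euclidean_space \<Rightarrow> real"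
    and L :: "nat \<Rightarrow> real" and xs :: "nat \<Rightarrow> 'a" and \<alpha> :: "nat \<Rightarrow> real"
    and n :: nat and x :: 'a
  assumes "n \<ge> 1"
    and smooth: "\<And>i. i \<in> {1..n} \<Longrightarrow> L_smooth (L i) (f i)"
    and minim: "\<And>i y. i \<in> {1..n} \<Longrightarrow> f i (xs i) \<le> f i y"
    and alpha: "\<And>i. i \<in> {1..n} \<Longrightarrow> 0 < \<alpha> i \<and> \<alpha> i < 1"
  defines "ft \<equiv> (\<lambda>z. (1 / real n) * (\<Sum>i=1..n. f i (\<alpha> i *\<^sub>R z + (1 - \<alpha> i) *\<^sub>R xs i)))"
  shows "norm (grad ft x) \<le> (1 / real n) * (\<Sum>i=1..n. (\<alpha> i)\<^sup>2 * L i * norm (x - xs i))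
       \<and> ft x \<le> (1 / real n) * (\<Sum>i=1..n. f i (xs i))
                + (1 / (2 * real n)) * (\<Sum>i=1..n. (\<alpha> i)\<^sup>2 * L i * (norm (x - xs i))\<^sup>2)"
proof
  define y where "y = (\<lambda>i. \<alpha> i *\<^sub>R x + (1 - \<alpha> i) *\<^sub>R xs i)"
  have ydiff: "y i - xs i = \<alpha> i *\<^sub>R (x - xs i)" for i
    unfolding y_def by (simp add: algebra_simps)
  have diff: "\<And>i z. i \<in> {1..n} \<Longrightarrow> f i differentiable at z"
    and lip: "\<And>i a b. i \<in> {1..n} \<Longrightarrow> norm (grad (f i) a - grad (f i) b) \<le> L i * norm (a - b)"
    using smooth unfolding L_smooth_def by auto
  have g0: "i \<in> {1..n} \<Longrightarrow> grad (f i) (xs i) = 0" for i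
    using grad_zero_min[OF diff] minim by blast
  define G where "G = (\<lambda>i. grad (f i) (y i))"
  have di: "((\<lambda>z. f i (\<alpha> i *\<^sub>R z + (1 - \<alpha> i) *\<^sub>R xs i)) has_derivative (\<lambda>h. h \<bullet> (\<alpha> i *\<^sub>R G i))) (at x)"
    if i: "i \<in> {1..n}" for i
  proof -
    have d1: "((\<lambda>z. \<alpha> i *\<^sub>R z + (1 - \<alpha> i) *\<^sub>R xs i) has_derivative (\<lambda>h. \<alpha> i *\<^sub>R h)) (at x)"
      by (auto intro!: derivative_eq_intros)
    show ?thesis
      using has_derivative_compose[OF d1 grad_works[OF diff[OF i], of "\<alpha> i *\<^sub>R x + (1 - \<alpha> i) *\<^sub>R xs i", unfolded gderiv_def]]
      unfolding G_def y_def by simp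
  qed
  have "(ft has_derivative (\<lambda>h. (1 / real n) * (\<Sum>i=1..n. h \<bullet> (\<alpha> i *\<^sub>R G i)))) (at x)"
    unfolding ft_def
    by (intro has_derivative_mult_right has_derivative_sum di) auto
  moreover have "(\<lambda>h. (1 / real n) * (\<Sum>i=1..n. h \<bullet> (\<alpha> i *\<^sub>R G i)))
      = (\<lambda>h. h \<bullet> ((1 / real n) *\<^sub>R (\<Sum>i=1..n. \<alpha> i *\<^sub>R G i)))"
    by (simp add: inner_sum_right)
  ultimately have "GDERIV ft x :> (1 / real n) *\<^sub>R (\<Sum>i=1..n. \<alpha> i *\<^sub>R G i)"
    unfolding gderiv_def by simp
  hence gft: "grad ft x = (1 / real n) *\<^sub>R (\<Sum>i=1..n. \<alpha> i *\<^sub>R G i)" by (rule grad_eq)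
  have "norm (grad ft x) = (1 / real n) * norm (\<Sum>i=1..n. \<alpha> i *\<^sub>R G i)"
    unfolding gft by simp
  also have "\<dots> \<le> (1 / real n) * (\<Sum>i=1..n. norm (\<alpha> i *\<^sub>R G i))"
    by (intro mult_left_mono norm_sum) auto
  also have "\<dots> \<le> (1 / real n) * (\<Sum>i=1..n. (\<alpha> i)\<^sup>2 * L i * norm (x - xs i))"
  proof (intro mult_left_mono sum_mono)
    fix i assume i: "i \<in> {1..n}"
    have "norm (G i) = norm (grad (f i) (y i) - grad (f i) (xs i))" using g0[OF i] G_def by simp
    also have "\<dots> \<le> L i * norm (y i - xs i)" by (rule lip[OF i])
    also have "\<dots> = L i * \<alpha> i * norm (x - xs i)" using alpha[OF i] by (simp add: ydiff)
    finally have "norm (G i) \<le> L i * \<alpha> i * norm (x - xs i)" .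
    hence "\<alpha> i * norm (G i) \<le> \<alpha> i * (L i * \<alpha> i * norm (x - xs i))"
      using alpha[OF i] by (intro mult_left_mono) auto
    thus "norm (\<alpha> i *\<^sub>R G i) \<le> (\<alpha> i)\<^sup>2 * L i * norm (x - xs i)"
      using alpha[OF i] by (simp add: power2_eq_square mult_ac)
  qed auto
  finally show "norm (grad ft x) \<le> (1 / real n) * (\<Sum>i=1..n. (\<alpha> i)\<^sup>2 * L i * norm (x - xs i))" .
next
  define y where "y = (\<lambda>i. \<alpha> i *\<^sub>R x + (1 - \<alpha> i) *\<^sub>R xs i)"
  have ydiff: "y i - xs i = \<alpha> i *\<^sub>R (x - xs i)" for i
    unfolding y_def by (simp add: algebra_simps)
  have diff: "\<And>i z. i \<in> {1..n} \<Longrightarrow> f i differentiable at z"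
    using smooth unfolding L_smooth_def by auto
  have g0: "i \<in> {1..n} \<Longrightarrow> grad (f i) (xs i) = 0" for i
    using grad_zero_min[OF diff] minim by blast
  have fi: "f i (y i) \<le> f i (xs i) + (\<alpha> i)\<^sup>2 * L i * (norm (x - xs i))\<^sup>2 / 2" if i: "i \<in> {1..n}" for i
  proof -
    have "f i (y i) \<le> f i (xs i) + grad (f i) (xs i) \<bullet> (y i - xs i) + L i / 2 * (norm (y i - xs i))\<^sup>2"
      by (rule descent[OF smooth[OF i]])
    also have "\<dots> = f i (xs i) + (\<alpha> i)\<^sup>2 * L i * (norm (x - xs i))\<^sup>2 / 2"
      using g0[OF i] alpha[OF i] by (simp add: ydiff power_mult_distrib)
    finally show ?thesis .
  qed
  have "ft x = (1 / real n) * (\<Sum>i=1..n. f i (y i))" unfolding ft_def y_def by simp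
  also have "\<dots> \<le> (1 / real n) * (\<Sum>i=1..n. f i (xs i) + (\<alpha> i)\<^sup>2 * L i * (norm (x - xs i))\<^sup>2 / 2)"
    by (intro mult_left_mono sum_mono fi) auto
  also have "\<dots> = (1 / real n) * (\<Sum>i=1..n. f i (xs i))
                + (1 / (2 * real n)) * (\<Sum>i=1..n. (\<alpha> i)\<^sup>2 * L i * (norm (x - xs i))\<^sup>2)"
    using assms(1) by (simp add: sum.distrib sum_divide_distrib[symmetric] field_simps sum_distrib_left[symmetric])
  finally show "ft x \<le> (1 / real n) * (\<Sum>i=1..n. f i (xs i))
                + (1 / (2 * real n)) * (\<Sum>i=1..n. (\<alpha> i)\<^sup>2 * L i * (norm (x - xs i))\<^sup>2)" .
qed

end
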